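(* Let $(S(t),E(t),I(t),R(t))$ be a solution of the SEIR initial value problem described in the context. If $S(t)>0$ for $t>0$, then \[ R''(t)+(\gamma+\delta)R'(t)=\gamma\delta\Bigl(N-\tilde S e^{(\beta/\gamma)\tilde R}e^{-(\beta/\gamma)R(t)}-R(t)\Bigr)\qquad(t>0). \]
   Context: Let $\beta,\gamma,\delta>0$ be constants and $\tilde S,\tilde E,\tilde I,\tilde R$ real numbers with $N:=\tilde S+\tilde E+\tilde I+\tilde R>0$. The SEIR initial value problem is $S'(t)=-\beta S(t)I(t)$, $E'(t)=\beta S(t)I(t)-\delta E(t)$, $I'(t)=\delta E(t)-\gamma I(t)$, $R'(t)=\gamma I(t)$ for $t>0$, with $S(0)=\tilde S$, $E(0)=\tilde E$, $I(0)=\tilde I$, $R(0)=\tilde R$; a solution is a vector function $(S,E,I,R)$ of class $C^1(0,\infty)\cap C[0,\infty)$ satisfying these. Standing assumptions: (A1) $\tilde I>0$; (A2) $\tilde E>(\gamma/\delta)\tilde I$; (A3) $\tilde S>\delta\tilde E/(\beta\tilde I)$; (A4) $\tilde R\ge 0$ and $N>\tilde S e^{(\beta/\gamma)\tilde R}+\tilde R$. *)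

theory Defs
  imports "HOL-Analysis.Analysis"
begin

definition is_C1_on_pos :: "(real \<Rightarrow> real) \<Rightarrow> bool" where
  "is_C1_on_pos f \<longleftrightarrow> (\<forall>t>0. f differentiable (at t)) \<and> continuous_on {0<..} (deriv f)"

definition SEIR_solution ::
  "real \<Rightarrow> real \<Rightarrow> real \<Rightarrow> real \<Rightarrow> real \<Rightarrow> real \<Rightarrow> real \<Rightarrow>
   (real \<Rightarrow> real) \<Rightarrow> (real \<Rightarrow> real) \<Rightarrow> (real \<Rightarrow> real) \<Rightarrow> (real \<Rightarrow> real) \<Rightarrow> bool" where
  "SEIR_solution \<beta> \<gamma> \<delta> S0 E0 I0 R0 S E I R \<longleftrightarrow>
     is_C1_on_pos S \<and> is_C1_on_pos E \<and> is_C1_on_pos I \<and> is_C1_on_pos R \<and>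
     continuous_on {0..} S \<and> continuous_on {0..} E \<and>
     continuous_on {0..} I \<and> continuous_on {0..} R \<and>
     (\<forall>t>0. (S has_real_derivative (- \<beta> * S t * I t)) (at t)) \<and>
     (\<forall>t>0. (E has_real_derivative (\<beta> * S t * I t - \<delta> * E t)) (at t)) \<and>
     (\<forall>t>0. (I has_real_derivative (\<delta> * E t - \<gamma> * I t)) (at t)) \<and>
     (\<forall>t>0. (R has_real_derivative (\<gamma> * I t)) (at t)) \<and>
     S 0 = S0 \<and> E 0 = E0 \<and> I 0 = I0 \<and> R 0 = R0"

end

theory Submission
  imports Defs
begin

lemma const_from0:
  fixes f :: "real \<Rightarrow> real"
  assumes "continuous_on {0..} f" "\<And>x. x > 0 \<Longrightarrow> (f has_real_derivative 0) (at x)" "t > 0"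
  shows "f t = f 0"
proof -
  have c: "continuous_on {0..t} f" using assms(1) by (rule continuous_on_subset) auto
  show ?thesis by (rule DERIV_isconst_end[OF assms(3) c]) (use assms(2) in auto)
qed

theorem lemma1:
  fixes \<beta> \<gamma> \<delta> S0 E0 I0 R0 :: real and S E I R :: "real \<Rightarrow> real"
  defines "N \<equiv> S0 + E0 + I0 + R0"
  assumes params: "\<beta> > 0" "\<gamma> > 0" "\<delta> > 0"
    and N_pos: "N > 0"
    and A1: "I0 > 0"
    and A2: "E0 > (\<gamma> / \<delta>) * I0"
    and A3: "S0 > \<delta> * E0 / (\<beta> * I0)"
    and A4: "R0 \<ge> 0" "N > S0 * exp ((\<beta> / \<gamma>) * R0) + R0"
    and sol: "SEIR_solution \<beta> \<gamma> \<delta> S0 E0 I0 R0 S E I R"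
    and S_pos: "\<forall>t>0. S t > 0"
  shows "\<forall>t>0. (deriv R has_real_derivative
           (\<gamma> * \<delta> * (N - S0 * exp ((\<beta> / \<gamma>) * R0) * exp (- (\<beta> / \<gamma>) * R t) - R t)
            - (\<gamma> + \<delta>) * deriv R t)) (at t)"
proof (intro allI impI)
  fix t :: real assume t: "t > 0"
  note s = sol[unfolded SEIR_solution_def]
  have dS: "\<And>x. x > 0 \<Longrightarrow> (S has_real_derivative (- \<beta> * S x * I x)) (at x)" using s by blast
  have dE: "\<And>x. x > 0 \<Longrightarrow> (E has_real_derivative (\<beta> * S x * I x - \<delta> * E x)) (at x)" using s by blast
  have dI: "\<And>x. x > 0 \<Longrightarrow> (I has_real_derivative (\<delta> * E x - \<gamma> * I x)) (at x)" using s by blast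
  have dR: "\<And>x. x > 0 \<Longrightarrow> (R has_real_derivative (\<gamma> * I x)) (at x)" using s by blast
  have cS: "continuous_on {0..} S" and cE: "continuous_on {0..} E" and cI: "continuous_on {0..} I"
    and cR: "continuous_on {0..} R" using s by auto
  have i0: "S 0 = S0" "E 0 = E0" "I 0 = I0" "R 0 = R0" using s by auto
  have sum: "S t + E t + I t + R t = N"
  proof -
    have "(\<lambda>x. S x + E x + I x + R x) t = (\<lambda>x. S x + E x + I x + R x) 0"
    proof (rule const_from0[OF _ _ t])
      show "continuous_on {0..} (\<lambda>x. S x + E x + I x + R x)"
        by (intro continuous_intros cS cE cI cR)
      fix x :: real assume x: "x > 0"
      have "((\<lambda>x. S x + E x + I x + R x) has_real_derivative
          (- \<beta> * S x * I x) + (\<beta> * S x * I x - \<delta> * E x) + (\<delta> * E x - \<gamma> * I x) + \<gamma> * I x) (at x)"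
        by (intro derivative_intros dS dE dI dR x)
      then show "((\<lambda>x. S x + E x + I x + R x) has_real_derivative 0) (at x)" by simp
    qed
    then show ?thesis using i0 by (simp add: N_def)
  qed
  define k where "k = \<beta> / \<gamma>"
  have Sform: "S t * exp (k * R t) = S0 * exp (k * R0)"
  proof -
    have "(\<lambda>x. S x * exp (k * R x)) t = (\<lambda>x. S x * exp (k * R x)) 0"
    proof (rule const_from0[OF _ _ t])
      show "continuous_on {0..} (\<lambda>x. S x * exp (k * R x))"
        by (intro continuous_intros cS cR)
      fix x :: real assume x: "x > 0"
      have "((\<lambda>x. S x * exp (k * R x)) has_real_derivative
          (- \<beta> * S x * I x) * exp (k * R x) + S x * (exp (k * R x) * (k * (\<gamma> * I x)))) (at x)"
      proof -
        have e: "((\<lambda>x. exp (k * R x)) has_real_derivative exp (k * R x) * (k * (\<gamma> * I x))) (at x)"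
          by (rule DERIV_fun_exp) (rule DERIV_cmult[OF dR[OF x]])
        show ?thesis using DERIV_mult[OF dS[OF x] e] by (simp add: algebra_simps)
      qed
      moreover have "(- \<beta> * S x * I x) * exp (k * R x) + S x * (exp (k * R x) * (k * (\<gamma> * I x))) = 0"
        using params by (simp add: k_def field_simps)
      ultimately show "((\<lambda>x. S x * exp (k * R x)) has_real_derivative 0) (at x)" by metis
    qed
    then show ?thesis using i0 by simp
  qed
  have Seq: "S0 * exp (k * R0) * exp (- k * R t) = S t"
    using Sform by (metis exp_minus_inverse mult.assoc mult.commute mult_1_right mult_minus_left)
  have dRe: "\<And>x. x > 0 \<Longrightarrow> deriv R x = \<gamma> * I x" using dR DERIV_imp_deriv by blast
  have "((\<lambda>x. \<gamma> * I x) has_real_derivative \<gamma> * (\<delta> * E t - \<gamma> * I t)) (at t)"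
    by (rule DERIV_cmult[OF dI[OF t]])
  then have "(deriv R has_real_derivative \<gamma> * (\<delta> * E t - \<gamma> * I t)) (at t)"
    by (rule has_field_derivative_transform_within_open[where S="{0<..}"]) (use t dRe in auto)
  moreover have "\<gamma> * (\<delta> * E t - \<gamma> * I t) =
     \<gamma> * \<delta> * (N - S0 * exp ((\<beta> / \<gamma>) * R0) * exp (- (\<beta> / \<gamma>) * R t) - R t) - (\<gamma> + \<delta>) * deriv R t"
    using Seq dRe[OF t] unfolding k_def[symmetric] sum[symmetric] by (simp add: algebra_simps)
  ultimately show "(deriv R has_real_derivative
           (\<gamma> * \<delta> * (N - S0 * exp ((\<beta> / \<gamma>) * R0) * exp (- (\<beta> / \<gamma>) * R t) - R t)
            - (\<gamma> + \<delta>) * deriv R t)) (at t)" by simp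
qed

end
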